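(* Let $(Q,\cdot)$ be a quadratical quasigroup and $a,b\in Q$ distinct. Then for every positive integer $t$: $t1\cdot t4=t2$, $t2\cdot t3=t4$, $t3\cdot t2=t1$ and $t4\cdot t1=t3$.
   Context: A quadratical quasigroup is a quasigroup satisfying $xy\cdot x=zx\cdot yz$ (equivalently, a groupoid satisfying $x\cdot x=x$, $yx\cdot xy=x$, $xy\cdot zw=xz\cdot yw$). The elements $tk$ ($t\ge1$, $k\in\{1,2,3,4\}$) are defined by $11=a$, $12=ab$, $13=ba$, $14=b$ and, for $n\ge2$, $n1=(n-1)1\cdot(n-1)2$, $n2=(n-1)2\cdot(n-1)4$, $n3=(n-1)3\cdot(n-1)1$, $n4=(n-1)4\cdot(n-1)3$. *)

theory Defs
  imports Main
begin

definition quasigroup :: "('a \<Rightarrow> 'a \<Rightarrow> 'a) \<Rightarrow> bool" where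
  "quasigroup m \<longleftrightarrow> (\<forall>a b. (\<exists>!x. m a x = b) \<and> (\<exists>!y. m y a = b))"

definition quadratical :: "('a \<Rightarrow> 'a \<Rightarrow> 'a) \<Rightarrow> bool" where
  "quadratical m \<longleftrightarrow> quasigroup m \<and>
     (\<forall>x y z. m (m x y) x = m (m z x) (m y z))"

text \<open>qseq m a b n = (t1, t2, t3, t4) for t = n + 1.\<close>
fun qseq :: "('a \<Rightarrow> 'a \<Rightarrow> 'a) \<Rightarrow> 'a \<Rightarrow> 'a \<Rightarrow> nat \<Rightarrow> 'a \<times> 'a \<times> 'a \<times> 'a" where
  "qseq m a b 0 = (a, m a b, m b a, b)"
| "qseq m a b (Suc n) = (case qseq m a b n of (x1, x2, x3, x4) \<Rightarrow>
      (m x1 x2, m x2 x4, m x3 x1, m x4 x3))"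

definition qel :: "('a \<Rightarrow> 'a \<Rightarrow> 'a) \<Rightarrow> 'a \<Rightarrow> 'a \<Rightarrow> nat \<Rightarrow> nat \<Rightarrow> 'a" where
  "qel m a b t k = (case qseq m a b (t - 1) of (x1, x2, x3, x4) \<Rightarrow>
      (if k = 1 then x1 else if k = 2 then x2 else if k = 3 then x3 else x4))"

end

theory Submission
  imports Defs
begin

lemma quad_facts:
  assumes "quadratical m"
  shows "m x x = x" "m (m y x) (m x y) = x"
    "m (m x y) (m z w) = m (m x z) (m y w)"
proof -
  have Q: "\<And>x y z. m (m x y) x = m (m z x) (m y z)"
    using assms unfolding quadratical_def by blast
  have qg: "quasigroup m" using assms unfolding quadratical_def by blast
  have c1: "\<And>a x y. m a x = m a y \<Longrightarrow> x = y"
    using qg unfolding quasigroup_def by metis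
  have idem: "\<And>x. m x x = x"
  proof -
    fix x
    have "m (m x x) x = m (m x x) (m x x)" using Q[of x x x] by simp
    thus "m x x = x" using c1 by metis
  qed
  have sw: "\<And>x y. m (m y x) (m x y) = x"
    using Q idem by metis
  show "m x x = x" by (rule idem)
  show "m (m y x) (m x y) = x" by (rule sw)
  show "m (m x y) (m z w) = m (m x z) (m y w)"
    by (smt (verit, best) Q sw)
qed

lemma qseq_prop:
  assumes "quadratical m"
  shows "case qseq m a b n of (x1, x2, x3, x4) \<Rightarrow>
     m x1 x4 = x2 \<and> m x2 x3 = x4 \<and> m x3 x2 = x1 \<and> m x4 x1 = x3"
proof (induction n)
  case 0
  then show ?case using quad_facts[OF assms] by simp
next
  case (Suc n)
  obtain x1 x2 x3 x4 where e: "qseq m a b n = (x1, x2, x3, x4)"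
    by (cases "qseq m a b n") auto
  have med: "\<And>x y z w. m (m x y) (m z w) = m (m x z) (m y w)"
    using quad_facts(3)[OF assms] by blast
  from Suc e have h: "m x1 x4 = x2" "m x2 x3 = x4" "m x3 x2 = x1" "m x4 x1 = x3"
    by auto
  show ?case using e h med[of x1 x2 x4 x3] med[of x2 x4 x3 x1]
      med[of x3 x1 x2 x4] med[of x4 x3 x1 x2] by simp
qed

theorem proposition3p5:
  fixes m :: "'a \<Rightarrow> 'a \<Rightarrow> 'a" and a b :: 'a and t :: nat
  assumes "quadratical m" and "a \<noteq> b" and "t \<ge> 1"
  shows "m (qel m a b t 1) (qel m a b t 4) = qel m a b t 2
       \<and> m (qel m a b t 2) (qel m a b t 3) = qel m a b t 4
       \<and> m (qel m a b t 3) (qel m a b t 2) = qel m a b t 1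
       \<and> m (qel m a b t 4) (qel m a b t 1) = qel m a b t 3"
  using qseq_prop[OF assms(1), of a b "t - 1"] unfolding qel_def
  by (cases "qseq m a b (t - 1)") auto

end
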